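(* In $NOM$, for every finite sequence $\Gamma$ and formulas $\phi,\psi$, the following rules are derivable: from $\Gamma\vdash\phi$ infer $\Gamma\vdash\neg\neg\phi$; from $\Gamma\vdash\neg\neg\phi$ infer $\Gamma\vdash\phi$; from $\Gamma,\phi\vdash\psi$ and $\Gamma,\phi\vdash\neg\psi$ infer $\Gamma\vdash\neg\phi$; from $\Gamma,\neg\phi\vdash\psi$ and $\Gamma,\neg\phi\vdash\neg\psi$ infer $\Gamma\vdash\phi$; from $\Gamma,\phi\vdash\neg\phi$ infer $\Gamma\vdash\neg\phi$; from $\Gamma,\neg\phi\vdash\phi$ infer $\Gamma\vdash\phi$.
   Context: The propositional deductive system $NOM$: formulas are built from propositional letters using $\wedge$, $\rightarrow$, $\neg$. Sequents are $\phi_1,\ldots,\phi_n\vdash\psi$ ($n\ge0$) with antecedent a finite ordered sequence. With $\Gamma$ a finite possibly empty sequence of formulas and $\phi,\psi,\chi$ formulas, the rules of $NOM$ are: (assumption) $\Gamma,\phi\vdash\phi$; (cut) $\Gamma\vdash\phi$, $\Gamma,\phi\vdash\psi$ $\Rightarrow$ $\Gamma\vdash\psi$; (paste) $\Gamma\vdash\phi$, $\Gamma\vdash\psi$ $\Rightarrow$ $\Gamma,\phi\vdash\psi$; (compatible exchange) $\Gamma,\phi,\psi\vdash\phi$, $\Gamma,\phi,\psi\vdash\chi$, $\Gamma,\psi,\phi\vdash\psi$ $\Rightarrow$ $\Gamma,\psi,\phi\vdash\chi$; ($\wedge$-intro) $\Gamma\vdash\phi$, $\Gamma\vdash\psi$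 $\Rightarrow$ $\Gamma\vdash\phi\wedge\psi$; ($\wedge$-elim) $\Gamma\vdash\phi\wedge\psi$ $\Rightarrow$ $\Gamma\vdash\phi$ and $\Rightarrow$ $\Gamma\vdash\psi$; ($\rightarrow$-intro) $\Gamma,\phi\vdash\psi$ $\Rightarrow$ $\Gamma\vdash\phi\rightarrow\psi$; ($\rightarrow$-elim) $\Gamma\vdash\phi\rightarrow\psi$ $\Rightarrow$ $\Gamma,\phi\vdash\psi$; (excluded middle) $\Gamma,\phi\vdash\psi$, $\Gamma,\neg\phi\vdash\psi$ $\Rightarrow$ $\Gamma\vdash\psi$; (explosion) $\Gamma\vdash\neg\phi$ $\Rightarrow$ $\Gamma,\phi\vdash\psi$. A rule schema is derivable if in every instance its conclusion can be derived from its premises using these rules. *)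

theory Defs
  imports Main
begin

datatype form = Var nat | Conj form form (infixr "\<^bold>\<and>" 35)
  | Imp form form (infixr "\<^bold>\<rightarrow>" 25) | Neg form ("\<^bold>\<not> _" [40] 40)

text \<open>A sequent Gamma |- phi is a pair (Gamma, phi) with Gamma a list (ordered sequence);
  "Gamma, phi" is Gamma @ [phi].  derives H Gamma phi means: the sequent is derivable in NOM
  using the set H of sequents as additional hypotheses (premises of a rule).\<close>

inductive derives :: "(form list \<times> form) set \<Rightarrow> form list \<Rightarrow> form \<Rightarrow> bool" for H where
  hyp: "(G, p) \<in> H \<Longrightarrow> derives H G p"
| assumption: "derives H (G @ [p]) p"
| cut: "derives H G p \<Longrightarrow> derives H (G @ [p]) q \<Longrightarrow> derives H G q"
| paste: "derives H G p \<Longrightarrow> derives H G q \<Longrightarrow> derives H (G @ [p]) q"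
| cexch: "derives H (G @ [p, q]) p \<Longrightarrow> derives H (G @ [p, q]) r \<Longrightarrow> derives H (G @ [q, p]) q
          \<Longrightarrow> derives H (G @ [q, p]) r"
| conjI: "derives H G p \<Longrightarrow> derives H G q \<Longrightarrow> derives H G (Conj p q)"
| conjE1: "derives H G (Conj p q) \<Longrightarrow> derives H G p"
| conjE2: "derives H G (Conj p q) \<Longrightarrow> derives H G q"
| impI: "derives H (G @ [p]) q \<Longrightarrow> derives H G (Imp p q)"
| impE: "derives H G (Imp p q) \<Longrightarrow> derives H (G @ [p]) q"
| em: "derives H (G @ [p]) q \<Longrightarrow> derives H (G @ [Neg p]) q \<Longrightarrow> derives H G q"
| explosion: "derives H G (Neg p) \<Longrightarrow> derives H (G @ [p]) q"

definition derivable_rule :: "(form list \<times> form) list \<Rightarrow> form list \<times> form \<Rightarrow> bool" where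
  "derivable_rule Ps C \<longleftrightarrow> derives (set Ps) (fst C) (snd C)"

end

theory Submission
  imports Defs
begin

lemma expl2: "derives H (G @ [a]) (Neg b) \<Longrightarrow> derives H (G @ [a, b]) c"
  using derives.explosion[of H "G @ [a]" b c] by simp

lemma paste2: "derives H (G @ [a]) b \<Longrightarrow> derives H (G @ [a]) c \<Longrightarrow> derives H (G @ [a, b]) c"
  using derives.paste[of H "G @ [a]" b c] by simp

lemma impE2: "derives H (G @ [a]) (Imp b c) \<Longrightarrow> derives H (G @ [a, b]) c"
  using derives.impE[of H "G @ [a]" b c] by simp

lemma impI2: "derives H (G @ [a, b]) c \<Longrightarrow> derives H (G @ [a]) (Imp b c)"
  using derives.impI[of H "G @ [a]" b c] by simp

lemma cut2: "derives H (G @ [a]) b \<Longrightarrow> derives H (G @ [a, b]) c \<Longrightarrow> derives H (G @ [a]) c"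
  using derives.cut[of H "G @ [a]" b c] by simp

lemma asm2: "derives H (G @ [a, b]) b"
  using derives.assumption[of H "G @ [a]" b] by simp

lemma dn_imp: "derives H G (Imp p (Neg (Neg p)))"
proof -
  have c: "derives H (G @ [Neg p]) (Imp p (Neg (Neg p)))"
    by (rule impI2, rule expl2, rule derives.assumption)
  have d: "derives H (G @ [Neg (Neg p)]) (Neg (Neg p))" by (rule derives.assumption)
  have g: "derives H (G @ [Neg (Neg p)]) p"
  proof -
    have "derives H ((G @ [Neg (Neg p)]) @ [p]) p" by (rule derives.assumption)
    moreover have "derives H ((G @ [Neg (Neg p)]) @ [Neg p]) p" by (rule derives.explosion[OF d])
    ultimately show ?thesis by (rule derives.em)
  qed
  have i: "derives H (G @ [Neg (Neg p)]) (Imp p (Neg (Neg p)))"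
    by (rule impI2, rule paste2, rule g, rule d)
  show ?thesis by (rule derives.em[where p="Neg p"], rule c, rule i)
qed

theorem proposition2p4:
  fixes G :: "form list" and p q :: form
  shows "derivable_rule [(G, p)] (G, Neg (Neg p)) \<and>
    derivable_rule [(G, Neg (Neg p))] (G, p) \<and>
    derivable_rule [(G @ [p], q), (G @ [p], Neg q)] (G, Neg p) \<and>
    derivable_rule [(G @ [Neg p], q), (G @ [Neg p], Neg q)] (G, p) \<and>
    derivable_rule [(G @ [p], Neg p)] (G, Neg p) \<and>
    derivable_rule [(G @ [Neg p], p)] (G, p)"
  unfolding derivable_rule_def fst_conv snd_conv list.set insert_commute[of _ _ "{}"]
proof (intro HOL.conjI)
  let ?H = "{(G, p)}"
  have h: "derives ?H G p" by (rule derives.hyp) simp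
  show "derives ?H G (Neg (Neg p))"
    by (rule derives.cut[OF h], rule derives.impE, rule dn_imp)
next
  let ?H = "{(G, Neg (Neg p))}"
  have h: "derives ?H G (Neg (Neg p))" by (rule derives.hyp) simp
  show "derives ?H G p"
    by (rule derives.em[where p=p], rule derives.assumption, rule derives.explosion[OF h])
next
  let ?H = "{(G @ [p], q), (G @ [p], Neg q)}"
  have h1: "derives ?H (G @ [p]) q" by (rule derives.hyp) simp
  have h2: "derives ?H (G @ [p]) (Neg q)" by (rule derives.hyp) simp
  have "derives ?H (G @ [p]) (Neg p)" by (rule cut2[OF h1], rule expl2[OF h2])
  then show "derives ?H G (Neg p)"
    using derives.em[where p=p] derives.assumption by blast
next
  let ?H = "{(G @ [Neg p], q), (G @ [Neg p], Neg q)}"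
  have h1: "derives ?H (G @ [Neg p]) q" by (rule derives.hyp) simp
  have h2: "derives ?H (G @ [Neg p]) (Neg q)" by (rule derives.hyp) simp
  have "derives ?H (G @ [Neg p]) p" by (rule cut2[OF h1], rule expl2[OF h2])
  then show "derives ?H G p"
    using derives.em[where p=p] derives.assumption by blast
next
  let ?H = "{(G @ [p], Neg p)}"
  have h: "derives ?H (G @ [p]) (Neg p)" by (rule derives.hyp) simp
  show "derives ?H G (Neg p)"
    by (rule derives.em[where p=p, OF h], rule derives.assumption)
next
  let ?H = "{(G @ [Neg p], p)}"
  have h: "derives ?H (G @ [Neg p]) p" by (rule derives.hyp) simp
  show "derives ?H G p"
    by (rule derives.em[where p=p, OF derives.assumption h])
qed

end
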